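(* For every $t>0$, the limit $\lim_{n\to\infty}\frac1n\log\mathbb{E}\big(e^{tH_n}\big)$ exists.
   Context: Standing setup (discrete-time Hawkes process, DTHP). Let $(a_i)_{i=0}^\infty$ be a sequence of strictly positive real numbers with $\sum_{i=0}^\infty a_i<1$ and $\sum_{i=1}^\infty i\,a_i<\infty$. The arrival process $\{\xi_n\}_{n\ge1}$ is a sequence of $\{0,1\}$-valued random variables on a probability space $(\Omega,\mathcal F,\mathbb P)$ with $\mathbb{P}(\xi_1=1)=a_0$, $\mathbb P(\xi_1=0)=1-a_0$, and for $n\ge2$, $$\mathbb{P}(\xi_n=1\mid \xi_1,\dots,\xi_{n-1})=a_0+\sum_{i=1}^{n-1}a_{n-i}\xi_i,\qquad \mathbb{P}(\xi_n=0\mid \xi_1,\dots,\xi_{n-1})=1-\Big(a_0+\sum_{i=1}^{n-1}a_{n-i}\xi_i\Big).$$ The DTHP is $H_n=\sum_{i=1}^n\xi_i$, and $\mathcal F_n=\sigma(\xi_1,\dots,\xi_n)$. *)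

theory Defs
  imports "HOL-Probability.Probability"
begin

definition dthp_intensity :: "(nat \<Rightarrow> real) \<Rightarrow> (nat \<Rightarrow> bool) \<Rightarrow> nat \<Rightarrow> real" where
  "dthp_intensity a x n = a 0 + (\<Sum>i = 1..<n. a (n - i) * of_bool (x i))"

text \<open>xi is a DTHP with kernel a on the probability space M: xi 1, xi 2, ... are
  {0,1}-valued (here bool-valued) random variables whose conditional law given the past is
  prescribed; the conditioning on the discrete past is written out elementarily:
  P(xi_1..xi_n = x_1..x_n) = P(xi_1..xi_{n-1} = x_1..x_{n-1}) * P(xi_n = x_n | past = x).
  The value xi 0 is irrelevant.\<close>
definition is_DTHP :: "'w measure \<Rightarrow> (nat \<Rightarrow> real) \<Rightarrow> (nat \<Rightarrow> 'w \<Rightarrow> bool) \<Rightarrow> bool" where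
  "is_DTHP M a \<xi> \<longleftrightarrow>
     prob_space M \<and>
     (\<forall>i. \<xi> i \<in> M \<rightarrow>\<^sub>M count_space UNIV) \<and>
     (\<forall>n\<ge>1. \<forall>x :: nat \<Rightarrow> bool.
        measure M {\<omega> \<in> space M. \<forall>i\<in>{1..n}. \<xi> i \<omega> = x i} =
        measure M {\<omega> \<in> space M. \<forall>i\<in>{1..<n}. \<xi> i \<omega> = x i} *
          (if x n then dthp_intensity a x n else 1 - dthp_intensity a x n))"

definition dthp_H :: "(nat \<Rightarrow> 'w \<Rightarrow> bool) \<Rightarrow> nat \<Rightarrow> 'w \<Rightarrow> nat" where
  "dthp_H \<xi> n \<omega> = (\<Sum>i = 1..n. of_bool (\<xi> i \<omega>))"

end

theory Submission
  imports Defs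
begin


fun W :: "(nat \<Rightarrow> real) \<Rightarrow> real \<Rightarrow> (nat \<Rightarrow> real) \<Rightarrow> nat \<Rightarrow> real" where
  "W a t c 0 = 1"
| "W a t c (Suc m) = max 0 (min 1 (a 0 + c 0)) * exp t * W a t (\<lambda>k. c (Suc k) + a (Suc k)) m
      + (1 - max 0 (min 1 (a 0 + c 0))) * W a t (\<lambda>k. c (Suc k)) m"

lemma W_ge1: "t \<ge> 0 \<Longrightarrow> W a t c m \<ge> 1"
proof (induction m arbitrary: c)
  case 0 then show ?case by simp
next
  case (Suc m)
  define l where "l = max 0 (min 1 (a 0 + c 0))"
  have l: "0 \<le> l" "l \<le> 1" unfolding l_def by auto
  have e: "exp t \<ge> 1" using Suc.prems by simp
  have w1: "W a t (\<lambda>k. c (Suc k) + a (Suc k)) m \<ge> 1" and w2: "W a t (\<lambda>k. c (Suc k)) m \<ge> 1"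
    using Suc by auto
  have "exp t * W a t (\<lambda>k. c (Suc k) + a (Suc k)) m \<ge> 1" using e w1
    using mult_mono[OF e w1] by simp
  then have "l * (exp t * W a t (\<lambda>k. c (Suc k) + a (Suc k)) m) \<ge> l" using l
    by (simp add: mult_le_cancel_left1)
  moreover have "(1 - l) * W a t (\<lambda>k. c (Suc k)) m \<ge> 1 - l" using l w2
    by (simp add: mult_le_cancel_left1)
  ultimately show ?case by (simp add: l_def[symmetric] mult.assoc)
qed

lemma W_mono:
  assumes "t \<ge> 0" "\<And>k. a k \<ge> 0"
  shows "(\<And>k. c k \<le> d k) \<Longrightarrow> W a t c m \<le> W a t d m"
proof (induction m arbitrary: c d)
  case 0 then show ?case by simp
next
  case (Suc m)
  define lc where "lc = max 0 (min 1 (a 0 + c 0))"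
  define ld where "ld = max 0 (min 1 (a 0 + d 0))"
  have l: "0 \<le> lc" "lc \<le> ld" "ld \<le> 1" unfolding lc_def ld_def using Suc.prems[of 0] by auto
  define c1 where "c1 = W a t (\<lambda>k. c (Suc k) + a (Suc k)) m"
  define c2 where "c2 = W a t (\<lambda>k. c (Suc k)) m"
  define d1 where "d1 = W a t (\<lambda>k. d (Suc k) + a (Suc k)) m"
  define d2 where "d2 = W a t (\<lambda>k. d (Suc k)) m"
  have "c1 \<le> d1" unfolding c1_def d1_def by (rule Suc.IH) (use Suc.prems in auto)
  moreover have "c2 \<le> d2" unfolding c2_def d2_def by (rule Suc.IH) (use Suc.prems in auto)
  moreover have "d2 \<le> d1" unfolding d2_def d1_def by (rule Suc.IH) (use assms in auto)
  moreover have "d1 \<ge> 1" unfolding d1_def using W_ge1 assms by blast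
  moreover have "c1 \<ge> 1" unfolding c1_def using W_ge1 assms by blast
  moreover have e: "exp t \<ge> 1" using assms by simp
  ultimately have "d2 \<le> exp t * d1" by (smt (verit) mult_le_cancel_right1)
  have "W a t c (Suc m) = lc * exp t * c1 + (1 - lc) * c2" by (simp add: lc_def c1_def c2_def)
  also have "\<dots> \<le> lc * exp t * d1 + (1 - lc) * d2"
    using l \<open>c1 \<le> d1\<close> \<open>c2 \<le> d2\<close> e
    by (intro add_mono mult_left_mono) auto
  also have "\<dots> = d2 + lc * (exp t * d1 - d2)" by (simp add: algebra_simps)
  also have "\<dots> \<le> d2 + ld * (exp t * d1 - d2)"
    using l \<open>d2 \<le> exp t * d1\<close> by (intro add_left_mono mult_right_mono) auto
  also have "\<dots> = W a t d (Suc m)" by (simp add: ld_def d1_def d2_def algebra_simps)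
  finally show ?case .
qed

lemma W_super:
  assumes "t \<ge> 0" "\<And>k. a k \<ge> 0"
  shows "(\<And>k. c k \<ge> 0) \<Longrightarrow> W a t c (n + m) \<ge> W a t c n * W a t (\<lambda>_. 0) m"
proof (induction n arbitrary: c)
  case 0 then show ?case using W_mono[OF assms, where c="\<lambda>_. 0" and d=c and m=m] by simp
next
  case (Suc n)
  define l where "l = max 0 (min 1 (a 0 + c 0))"
  have l: "0 \<le> l" "l \<le> 1" unfolding l_def by auto
  define Z where "Z = W a t (\<lambda>_. 0) m"
  have i1: "W a t (\<lambda>k. c (Suc k) + a (Suc k)) (n + m) \<ge> W a t (\<lambda>k. c (Suc k) + a (Suc k)) n * Z"
    unfolding Z_def by (rule Suc.IH) (use Suc.prems assms in \<open>auto intro: add_nonneg_nonneg\<close>)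
  have i2: "W a t (\<lambda>k. c (Suc k)) (n + m) \<ge> W a t (\<lambda>k. c (Suc k)) n * Z"
    unfolding Z_def by (rule Suc.IH) (use Suc.prems in auto)
  have "W a t c (Suc n) * Z = l * exp t * (W a t (\<lambda>k. c (Suc k) + a (Suc k)) n * Z)
      + (1 - l) * (W a t (\<lambda>k. c (Suc k)) n * Z)" by (simp add: l_def algebra_simps)
  also have "\<dots> \<le> l * exp t * W a t (\<lambda>k. c (Suc k) + a (Suc k)) (n + m)
      + (1 - l) * W a t (\<lambda>k. c (Suc k)) (n + m)"
    using l i1 i2 by (intro add_mono mult_left_mono) auto
  also have "\<dots> = W a t c (Suc n + m)" by (simp add: l_def)
  finally show ?case by (simp add: Z_def)
qed

lemma W_le: "t \<ge> 0 \<Longrightarrow> W a t c m \<le> exp (t * m)"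
proof (induction m arbitrary: c)
  case 0 then show ?case by simp
next
  case (Suc m)
  define l where "l = max 0 (min 1 (a 0 + c 0))"
  have l: "0 \<le> l" "l \<le> 1" unfolding l_def by auto
  have e: "exp (t * Suc m) = exp t * exp (t * m)" by (simp add: mult_exp_exp[symmetric] algebra_simps)
  have w1: "W a t (\<lambda>k. c (Suc k) + a (Suc k)) m \<le> exp (t * m)" and w2: "W a t (\<lambda>k. c (Suc k)) m \<le> exp (t*m)"
    using Suc by auto
  have "exp (t*m) \<le> exp t * exp (t * m)" using Suc.prems by simp
  have "W a t c (Suc m) \<le> l * exp t * exp (t*m) + (1 - l) * (exp t * exp (t*m))"
    unfolding W.simps l_def[symmetric] using l w1 order.trans[OF w2 \<open>exp (t*m) \<le> exp t * exp (t * m)\<close>]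
    by (intro add_mono mult_left_mono) auto
  also have "\<dots> = exp (t * Suc m)" by (simp only: e) (simp add: algebra_simps)
  finally show ?case .
qed

lemma fekete:
  fixes f :: "nat \<Rightarrow> real" and C :: real
  assumes sup: "\<And>n m. f (n + m) \<ge> f n + f m" and nn: "\<And>n. f n \<ge> 0" and ub: "\<And>n. f n \<le> C * n"
  shows "convergent (\<lambda>n. f n / n)"
proof -
  define L where "L = (SUP k\<in>{1..}. f k / k)"
  have bdd: "bdd_above ((\<lambda>k. f k / k) ` {1..})"
    proof (rule bdd_aboveI2)
    fix k :: nat assume "k \<in> {1..}"
    then have "real k > 0" by simp
    then show "f k / k \<le> C" using ub[of k] by (simp add: pos_divide_le_eq)
  qed
  have C0: "C \<ge> 0" using ub[of 1] nn[of 1] by simp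
  have upper: "f n / n \<le> L" if "n \<ge> 1" for n
    unfolding L_def using that bdd nn by (intro cSUP_upper) auto
  have mult: "f (q * k) \<ge> q * f k" for q k
  proof (induction q)
    case 0 then show ?case using nn[of 0] by simp
  next
    case (Suc q)
    have "f (Suc q * k) = f (k + q * k)" by simp
    also have "\<dots> \<ge> f k + f (q * k)" by (rule sup)
    finally show ?case using Suc by (simp add: algebra_simps)
  qed
  have "(\<lambda>n. f n / n) \<longlonglongrightarrow> L"
  proof (rule LIMSEQ_I)
    fix r :: real assume r: "r > 0"
    have "L - r/2 < L" using r by simp
    then obtain k where k: "k \<ge> 1" "L - r/2 < f k / k"
      unfolding L_def using bdd by (subst (asm) less_cSUP_iff) auto
    obtain N :: nat where N: "N > 2 * C * k / r" using reals_Archimedean2 by blast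
    show "\<exists>no. \<forall>n\<ge>no. norm (f n / n - L) < r"
    proof (intro exI allI impI)
      fix n assume n: "n \<ge> N + 1"
      have n1: "n \<ge> 1" using n by simp
      have "f n = f ((n div k) * k + n mod k)" by simp
      also have "\<dots> \<ge> f ((n div k) * k)" using sup[of "(n div k) * k" "n mod k"] nn[of "n mod k"] by linarith
      finally have fnk: "f n \<ge> (n div k) * f k" using mult[of "n div k" k] by linarith
      have dk: "real (n div k) * k \<ge> real n - k"
      proof -
        have "n div k * k + n mod k = n" by simp
        moreover have "n mod k < k" using k by simp
        ultimately have "n div k * k \<ge> n - k" by linarith
        then show ?thesis
          by (metis of_nat_diff of_nat_le_iff of_nat_mult diff_le_eq le_diff_eq linorder_le_cases of_nat_0_le_iff
              order.trans diff_ge_0_iff_ge)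
      qed
      have "(real n - k) * (f k / k) \<le> real (n div k) * k * (f k / k)"
        using dk nn[of k] k by (intro mult_right_mono) auto
      also have "\<dots> = real (n div k) * f k" using k by simp
      finally have A: "(real n - k) * (f k / k) \<le> f n" using fnk by linarith
      have "f k / k - f k / n = (real n - k) * (f k / k) / n" using n1 k by (simp add: field_simps)
      also have "\<dots> \<le> f n / n" using A n1 by (intro divide_right_mono) auto
      finally have "f k / k - f k / n \<le> f n / n" .
      moreover have "f k / n < r / 2"
      proof -
        have "f k \<le> C * k" by (rule ub)
        have "real n > 2 * C * k / r" using N n by linarith
        then have "2 * C * k < r * n" using r by (simp add: field_simps)
        then have "f k * 2 < r * n" using \<open>f k \<le> C * k\<close> by linarith
        then show ?thesis using n1 by (simp add: field_simps)
      qed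
      ultimately have "f n / n > L - r" using k by linarith
      moreover have "f n / n \<le> L" using upper n1 by blast
      ultimately show "norm (f n / n - L) < r" using r by simp
    qed
  qed
  then show ?thesis by (rule convergentI)
qed

lemma dthp_connect:
  fixes a :: "nat \<Rightarrow> real" and M :: "'w measure" and \<xi> :: "nat \<Rightarrow> 'w \<Rightarrow> bool" and t :: real
  assumes dthp: "is_DTHP M a \<xi>" and t0: "t \<ge> 0"
  defines "A \<equiv> \<lambda>n x. {\<omega> \<in> space M. \<forall>i\<in>{1..n}. \<xi> i \<omega> = x i}"
  defines "cx \<equiv> \<lambda>n x k. \<Sum>i=1..n. a (n + k + 1 - i) * of_bool (x i)"
  defines "F \<equiv> \<lambda>n m \<omega>. \<Prod>i\<in>{n<..n+m}. if \<xi> i \<omega> then exp t else 1"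
  shows "(\<integral>\<omega>. indicator (A n x) \<omega> * F n m \<omega> \<partial>M) = measure M (A n x) * W a t (cx n x) m"
proof -
  interpret prob_space M using dthp unfolding is_DTHP_def by blast
  have [measurable]: "\<xi> i \<in> M \<rightarrow>\<^sub>M count_space UNIV" for i using dthp unfolding is_DTHP_def by blast
  have Asets[measurable]: "A n x \<in> sets M" for n x unfolding A_def by measurable
  have Fmeas[measurable]: "F n m \<in> borel_measurable M" for n m unfolding F_def by measurable
  have Fnn: "0 \<le> F n m \<omega>" for n m \<omega> unfolding F_def by (intro prod_nonneg) auto
  have Fub: "F n m \<omega> \<le> exp t ^ m" for n m \<omega>
  proof -
    have "F n m \<omega> \<le> (\<Prod>i\<in>{n<..n+m}. exp t)" unfolding F_def using t0
      by (intro prod_mono) auto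
    then show ?thesis by simp
  qed
  have integ: "integrable M (\<lambda>\<omega>. indicator (A n x) \<omega> * F n m \<omega>)" for n m x
  proof (rule integrable_const_bound[where B="exp t ^ m"])
    show "AE \<omega> in M. norm (indicator (A n x) \<omega> * F n m \<omega>) \<le> exp t ^ m"
      using Fnn Fub by (auto simp: indicator_def)
  qed measurable
  have Aspace: "A n x \<inter> space M = A n x" for n x unfolding A_def by auto
  have AS: "A (Suc n) y = {\<omega> \<in> A n y. \<xi> (Suc n) \<omega> = y (Suc n)}" for n y
  proof -
    have "{1..Suc n} = insert (Suc n) {1..n}" by auto
    then show ?thesis unfolding A_def by auto
  qed
  have Aeq: "A n y = A n x" if "\<And>i. i \<in> {1..n} \<Longrightarrow> y i = x i" for n x y
    unfolding A_def using that by auto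
  have DT: "measure M (A (Suc n) y) = measure M (A n y) *
      (if y (Suc n) then dthp_intensity a y (Suc n) else 1 - dthp_intensity a y (Suc n))" for n y
  proof -
    have "measure M {\<omega> \<in> space M. \<forall>i\<in>{1..Suc n}. \<xi> i \<omega> = y i} =
        measure M {\<omega> \<in> space M. \<forall>i\<in>{1..<Suc n}. \<xi> i \<omega> = y i} *
          (if y (Suc n) then dthp_intensity a y (Suc n) else 1 - dthp_intensity a y (Suc n))"
      using conjunct2[OF conjunct2[OF dthp[unfolded is_DTHP_def]], rule_format, of "Suc n" y] by simp
    moreover have "{1..<Suc n} = {1..n}" by auto
    ultimately show ?thesis unfolding A_def by simp
  qed
  have INT: "dthp_intensity a y (Suc n) = a 0 + cx n x 0" if "\<And>i. i \<in> {1..n} \<Longrightarrow> y i = x i" for n x y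
  proof -
    have "{1..<Suc n} = {1..n}" by auto
    then show ?thesis unfolding dthp_intensity_def cx_def
      using that by (auto intro!: sum.cong)
  qed
  show ?thesis
  proof (induction m arbitrary: n x)
    case 0
    have "F n 0 = (\<lambda>_. 1)" unfolding F_def by (auto simp: fun_eq_iff)
    then show ?case using Aspace by simp
  next
    case (Suc m)
    define xT where "xT = x(Suc n := True)"
    define xF where "xF = x(Suc n := False)"
    have agT: "\<And>i. i \<in> {1..n} \<Longrightarrow> xT i = x i" and agF: "\<And>i. i \<in> {1..n} \<Longrightarrow> xF i = x i"
      unfolding xT_def xF_def by auto
    have Fsplit: "F n (Suc m) \<omega> = (if \<xi> (Suc n) \<omega> then exp t else 1) * F (Suc n) m \<omega>" for \<omega>
    proof -
      have "{n<..n + Suc m} = insert (Suc n) {Suc n<..Suc n + m}" by auto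
      then show ?thesis unfolding F_def by simp
    qed
    have pw: "indicator (A n x) \<omega> * F n (Suc m) \<omega> =
       exp t * (indicator (A (Suc n) xT) \<omega> * F (Suc n) m \<omega>) + indicator (A (Suc n) xF) \<omega> * F (Suc n) m \<omega>" for \<omega>
    proof -
      have "A n xT = A n x" "A n xF = A n x" using Aeq[OF agT] Aeq[OF agF] by auto
      moreover have "xT (Suc n)" "\<not> xF (Suc n)" unfolding xT_def xF_def by auto
      ultimately show ?thesis unfolding Fsplit AS by (auto simp: indicator_def)
    qed
    define p where "p = measure M (A n x)"
    define l where "l = a 0 + cx n x 0"
    have IT: "dthp_intensity a xT (Suc n) = a 0 + cx n x 0" by (rule INT) (rule agT)
    have IF: "dthp_intensity a xF (Suc n) = a 0 + cx n x 0" by (rule INT) (rule agF)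
    have AT': "A n xT = A n x" by (rule Aeq) (rule agT)
    have AF': "A n xF = A n x" by (rule Aeq) (rule agF)
    have vT: "xT (Suc n)" and vF: "\<not> xF (Suc n)" unfolding xT_def xF_def by auto
    have PT: "measure M (A (Suc n) xT) = p * l"
      using DT[of n xT] IT AT' vT by (simp add: p_def l_def)
    have PF: "measure M (A (Suc n) xF) = p * (1 - l)"
      using DT[of n xF] IF AF' vF by (simp add: p_def l_def)
    have cT: "cx (Suc n) xT = (\<lambda>k. cx n x (Suc k) + a (Suc k))"
    proof
      fix k
      have "cx (Suc n) xT k = (\<Sum>i=1..n. a (Suc n + k + 1 - i) * of_bool (xT i)) + a (Suc n + k + 1 - Suc n) * of_bool (xT (Suc n))"
        unfolding cx_def by (simp add: sum.cl_ivl_Suc)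
      also have "\<dots> = cx n x (Suc k) + a (Suc k)"
        unfolding cx_def using agT by (auto simp: xT_def intro!: sum.cong)
      finally show "cx (Suc n) xT k = cx n x (Suc k) + a (Suc k)" .
    qed
    have cF: "cx (Suc n) xF = (\<lambda>k. cx n x (Suc k))"
    proof
      fix k
      have "cx (Suc n) xF k = (\<Sum>i=1..n. a (Suc n + k + 1 - i) * of_bool (xF i)) + a (Suc n + k + 1 - Suc n) * of_bool (xF (Suc n))"
        unfolding cx_def by (simp add: sum.cl_ivl_Suc)
      also have "\<dots> = cx n x (Suc k)"
        unfolding cx_def using agF by (auto simp: xF_def intro!: sum.cong)
      finally show "cx (Suc n) xF k = cx n x (Suc k)" .
    qed
    have "(\<integral>\<omega>. indicator (A n x) \<omega> * F n (Suc m) \<omega> \<partial>M) =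
       (\<integral>\<omega>. exp t * (indicator (A (Suc n) xT) \<omega> * F (Suc n) m \<omega>) + indicator (A (Suc n) xF) \<omega> * F (Suc n) m \<omega> \<partial>M)"
      by (simp only: pw)
    also have "\<dots> = exp t * (\<integral>\<omega>. indicator (A (Suc n) xT) \<omega> * F (Suc n) m \<omega> \<partial>M) + (\<integral>\<omega>. indicator (A (Suc n) xF) \<omega> * F (Suc n) m \<omega> \<partial>M)"
      by (subst Bochner_Integration.integral_add) (auto intro: integ)
    also have "\<dots> = exp t * (p * l * W a t (\<lambda>k. cx n x (Suc k) + a (Suc k)) m) + p * (1 - l) * W a t (\<lambda>k. cx n x (Suc k)) m"
      using Suc.IH[of "Suc n" xT] Suc.IH[of "Suc n" xF] PT PF cT cF by simp
    also have "\<dots> = p * W a t (cx n x) (Suc m)"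
    proof (cases "p = 0")
      case True then show ?thesis by simp
    next
      case False
      have "p \<ge> 0" unfolding p_def by simp
      with False have pp: "p > 0" by simp
      have "p * l \<ge> 0" using PT[symmetric] by simp
      then have "l \<ge> 0" using pp by (simp add: zero_le_mult_iff)
      have "p * (1 - l) \<ge> 0" using PF[symmetric] by simp
      then have "l \<le> 1" using pp by (simp add: zero_le_mult_iff)
      have "max 0 (min 1 (a 0 + cx n x 0)) = l" using \<open>l \<ge> 0\<close> \<open>l \<le> 1\<close> unfolding l_def by simp
      then show ?thesis by (simp add: algebra_simps)
    qed
    finally show ?case unfolding p_def .
  qed
qed

theorem lemma4p7:
  fixes a :: "nat \<Rightarrow> real" and M :: "'w measure" and \<xi> :: "nat \<Rightarrow> 'w \<Rightarrow> bool" and t :: real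
  assumes a_pos: "\<And>i. a i > 0"
    and a_summable: "summable a"
    and a_sum_lt1: "(\<Sum>i. a i) < 1"
    and a_mean: "summable (\<lambda>i. real i * a i)"
    and dthp: "is_DTHP M a \<xi>"
    and t_pos: "t > 0"
  shows "convergent (\<lambda>n. ln (\<integral>\<omega>. exp (t * real (dthp_H \<xi> n \<omega>)) \<partial>M) / real n)"
proof -
  interpret prob_space M using dthp unfolding is_DTHP_def by blast
  have t0: "t \<ge> 0" using t_pos by simp
  have a0: "\<And>k. a k \<ge> 0" using a_pos less_imp_le by blast
  have E: "(\<integral>\<omega>. exp (t * real (dthp_H \<xi> n \<omega>)) \<partial>M) = W a t (\<lambda>_. 0) n" for n
  proof -
    have C: "(\<integral>\<omega>. indicator {\<omega> \<in> space M. \<forall>i\<in>{1..0}. \<xi> i \<omega> = False} \<omega> *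
        (\<Prod>i\<in>{0<..0+n}. if \<xi> i \<omega> then exp t else 1) \<partial>M)
      = measure M {\<omega> \<in> space M. \<forall>i\<in>{1..0}. \<xi> i \<omega> = False} *
        W a t (\<lambda>k. \<Sum>i=1..0. a (0 + k + 1 - i) * of_bool False) n"
      using dthp_connect[OF dthp t0, of 0 "\<lambda>_. False" n] by simp
    have "(\<integral>\<omega>. exp (t * real (dthp_H \<xi> n \<omega>)) \<partial>M) =
      (\<integral>\<omega>. indicator {\<omega> \<in> space M. \<forall>i\<in>{1..0}. \<xi> i \<omega> = False} \<omega> *
        (\<Prod>i\<in>{0<..0+n}. if \<xi> i \<omega> then exp t else 1) \<partial>M)"
    proof (rule Bochner_Integration.integral_cong)
      fix \<omega> assume "\<omega> \<in> space M"
      have s: "{0<..0+n} = {1..n}" by auto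
      have "exp (t * real (dthp_H \<xi> n \<omega>)) = exp (\<Sum>i=1..n. t * of_bool (\<xi> i \<omega>))"
        unfolding dthp_H_def by (simp add: sum_distrib_left)
      also have "\<dots> = (\<Prod>i=1..n. exp (t * of_bool (\<xi> i \<omega>)))" by (rule exp_sum) simp
      also have "\<dots> = (\<Prod>i=1..n. if \<xi> i \<omega> then exp t else 1)" by (intro prod.cong) auto
      finally show "exp (t * real (dthp_H \<xi> n \<omega>)) = indicator {\<omega> \<in> space M. \<forall>i\<in>{1..0}. \<xi> i \<omega> = False} \<omega> *
        (\<Prod>i\<in>{0<..0+n}. if \<xi> i \<omega> then exp t else 1)"
        using \<open>\<omega> \<in> space M\<close> s by simp
    qed simp
    also have "\<dots> = W a t (\<lambda>_. 0) n" unfolding C by (simp add: prob_space)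
    finally show ?thesis .
  qed
  define f where "f n = ln (W a t (\<lambda>_. 0) n)" for n
  have Wpos: "W a t c n > 0" for c n using W_ge1[OF t0, of a c n] by simp
  have "convergent (\<lambda>n. f n / n)"
  proof (rule fekete[where C=t])
    fix n m
    have "f n + f m = ln (W a t (\<lambda>_. 0) n * W a t (\<lambda>_. 0) m)"
      unfolding f_def by (rule ln_mult_pos[symmetric]) (rule Wpos)+
    also have "\<dots> \<le> f (n + m)" unfolding f_def
      using W_super[OF t0 a0, where c="\<lambda>_. 0" and n=n and m=m] Wpos by (subst ln_le_cancel_iff) (auto intro: mult_pos_pos)
    finally show "f n + f m \<le> f (n + m)" .
  next
    fix n show "0 \<le> f n" unfolding f_def using W_ge1[OF t0] by simp
  next
    fix n
    have "f n \<le> ln (exp (t * n))" unfolding f_def using W_le[OF t0, of a "\<lambda>_. 0" n] Wpos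
      by (subst ln_le_cancel_iff) auto
    then show "f n \<le> t * n" by simp
  qed
  then show ?thesis unfolding E f_def .
qed

end
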